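(* Let $I$ be a set, $\lambda,\rho\colon I\to I$ bijections, and $E$ a non-trivial directed $\lambda,\rho$-weakly commutative generalized pseudo effect algebra. If the kite pseudo effect algebra $K^{\lambda,\rho}_I(E)$ satisfies RDP$_1$ and has a least non-trivial normal ideal, then $I$ is at most countable.
   Context: A generalized pseudo effect algebra (GPEA) is a structure $(E;+,0)$ with partial binary $+$ and constant $0$ such that for all $a,b,c$: (GP1) $a+b$ and $(a+b)+c$ exist iff $b+c$ and $a+(b+c)$ exist, and then they are equal; (GP2) if $a+b$ exists there are $d,e$ with $a+b=d+a=b+e$; (GP3) left and right cancellation; (GP4) $a+b=0$ implies $a=b=0$; (GP5) $a+0=0+a=a$. Non-trivial: $E\neq\{0\}$. Order: $a\le b$ iff $a+c=b$ for some $c$; for $a\le b$, $b\ominus_\ell a$ is the unique $d$ with $d+a=b$, $a\ominus_r b$ the unique $e$ with $a+e=b$. Directed: any two elements have a common upper bound. RDP$_1$: whenever $a_1+a_2=b_1+b_2$ there are $c_{11},c_{12},c_{21},c_{22}$ with $a_1=c_{11}+c_{12}$, $a_2=c_{21}+c_{22}$, $b_1=c_{11}+c_{21}$, $b_2=c_{12}+c_{22}$, such that $0\le x\le c_{12}$, $0\le y\le c_{21}$ imply $x+y=y+x$. An ideal is a non-empty subset closed under existing sums and downward closed; normal if $x+N=N+x$ for all $x$ ($x+N=\{x+y\colon y\in N,\ x+y\text{ defined}\}$, $N+x$ dually); non-trivial if $\neq\{0\}$; least non-trivial if contained in every non-trivial normal ideal. $\lambda,\rho$-weak commutativity: for all families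 $(f_j)$, $(a_i)$ in $E$ and all $i$: $f_{\rho^{-1}(i)}+a_i$ defined iff $a_i+f_{\lambda^{-1}(i)}$ defined, and $f_{\lambda^{-1}(i)}+a_i$ defined iff $a_i+f_{\rho^{-1}(i)}$ defined. Kite $K^{\lambda,\rho}_I(E)$ (a pseudo effect algebra): universe $E^I\uplus\overline E^I$, $\overline E=\{\bar a\colon a\in E\}$ a disjoint copy; $0=\langle 0\rangle$, $1=\langle\bar 0\rangle$; $\langle\bar a_i\rangle+\langle\bar b_i\rangle$ undefined; $\langle\bar a_i\colon i\in I\rangle+\langle f_j\colon j\in I\rangle=\langle\overline{f_{\rho^{-1}(i)}\ominus_r a_i}\rangle$ when $f_{\rho^{-1}(i)}\le a_i$ for all $i$; $\langle f_j\rangle+\langle\bar a_i\rangle=\langle\overline{a_i\ominus_\ell f_{\lambda^{-1}(i)}}\rangle$ when $f_{\lambda^{-1}(i)}\le a_i$ for all $i$; $\langle f_j\rangle+\langle g_j\rangle=\langle f_j+g_j\rangle$ when all coordinate sums are defined. *)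

theory Defs
  imports Main "HOL-Library.FuncSet" "HOL-Library.Countable_Set"
begin

definition pleq :: "'a set \<Rightarrow> ('a \<Rightarrow> 'a \<Rightarrow> 'a option) \<Rightarrow> 'a \<Rightarrow> 'a \<Rightarrow> bool" where
  "pleq S p a b \<longleftrightarrow> (\<exists>c\<in>S. p a c = Some b)"

definition minus_l :: "'a set \<Rightarrow> ('a \<Rightarrow> 'a \<Rightarrow> 'a option) \<Rightarrow> 'a \<Rightarrow> 'a \<Rightarrow> 'a" where
  "minus_l S p b a = (THE d. d \<in> S \<and> p d a = Some b)"

definition minus_r :: "'a set \<Rightarrow> ('a \<Rightarrow> 'a \<Rightarrow> 'a option) \<Rightarrow> 'a \<Rightarrow> 'a \<Rightarrow> 'a" where
  "minus_r S p a b = (THE e. e \<in> S \<and> p a e = Some b)"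

definition gpea :: "'a set \<Rightarrow> ('a \<Rightarrow> 'a \<Rightarrow> 'a option) \<Rightarrow> 'a \<Rightarrow> bool" where
  "gpea E p z \<longleftrightarrow>
     z \<in> E \<and>
     (\<forall>a\<in>E. \<forall>b\<in>E. \<forall>c. p a b = Some c \<longrightarrow> c \<in> E) \<and>
     \<comment> \<open>GP1\<close>
     (\<forall>a\<in>E. \<forall>b\<in>E. \<forall>c\<in>E. Option.bind (p a b) (\<lambda>s. p s c) = Option.bind (p b c) (\<lambda>t. p a t)) \<and>
     \<comment> \<open>GP2\<close>
     (\<forall>a\<in>E. \<forall>b\<in>E. \<forall>s. p a b = Some s \<longrightarrow> (\<exists>d\<in>E. \<exists>e\<in>E. p d a = Some s \<and> p b e = Some s)) \<and>
     \<comment> \<open>GP3\<close>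
     (\<forall>a\<in>E. \<forall>b\<in>E. \<forall>c\<in>E. p a b \<noteq> None \<and> p a b = p a c \<longrightarrow> b = c) \<and>
     (\<forall>a\<in>E. \<forall>b\<in>E. \<forall>c\<in>E. p b a \<noteq> None \<and> p b a = p c a \<longrightarrow> b = c) \<and>
     \<comment> \<open>GP4\<close>
     (\<forall>a\<in>E. \<forall>b\<in>E. p a b = Some z \<longrightarrow> a = z \<and> b = z) \<and>
     \<comment> \<open>GP5\<close>
     (\<forall>a\<in>E. p a z = Some a \<and> p z a = Some a)"

definition directed :: "'a set \<Rightarrow> ('a \<Rightarrow> 'a \<Rightarrow> 'a option) \<Rightarrow> bool" where
  "directed E p \<longleftrightarrow> (\<forall>a\<in>E. \<forall>b\<in>E. \<exists>c\<in>E. pleq E p a c \<and> pleq E p b c)"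

definition weakly_comm ::
  "'i set \<Rightarrow> ('i \<Rightarrow> 'i) \<Rightarrow> ('i \<Rightarrow> 'i) \<Rightarrow> 'a set \<Rightarrow> ('a \<Rightarrow> 'a \<Rightarrow> 'a option) \<Rightarrow> bool" where
  "weakly_comm I lam rho E p \<longleftrightarrow>
     (\<forall>f\<in>I \<rightarrow> E. \<forall>a\<in>I \<rightarrow> E. \<forall>i\<in>I.
        (p (f (inv_into I rho i)) (a i) \<noteq> None \<longleftrightarrow> p (a i) (f (inv_into I lam i)) \<noteq> None) \<and>
        (p (f (inv_into I lam i)) (a i) \<noteq> None \<longleftrightarrow> p (a i) (f (inv_into I rho i)) \<noteq> None))"

text \<open>Kite: Inl f stands for \<langle>f_j\<rangle> \<in> E^I, Inr a for \<langle>bar a_i\<rangle> \<in> bar E^I.\<close>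
definition kite_carrier :: "'i set \<Rightarrow> 'a set \<Rightarrow> (('i \<Rightarrow> 'a) + ('i \<Rightarrow> 'a)) set" where
  "kite_carrier I E = Inl ` (I \<rightarrow>\<^sub>E E) \<union> Inr ` (I \<rightarrow>\<^sub>E E)"

definition kite_zero :: "'i set \<Rightarrow> 'a \<Rightarrow> ('i \<Rightarrow> 'a) + ('i \<Rightarrow> 'a)" where
  "kite_zero I z = Inl (\<lambda>i\<in>I. z)"

definition kite_plus ::
  "'i set \<Rightarrow> ('i \<Rightarrow> 'i) \<Rightarrow> ('i \<Rightarrow> 'i) \<Rightarrow> 'a set \<Rightarrow> ('a \<Rightarrow> 'a \<Rightarrow> 'a option)
   \<Rightarrow> ('i \<Rightarrow> 'a) + ('i \<Rightarrow> 'a) \<Rightarrow> ('i \<Rightarrow> 'a) + ('i \<Rightarrow> 'a) \<Rightarrow> (('i \<Rightarrow> 'a) + ('i \<Rightarrow> 'a)) option" where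
  "kite_plus I lam rho E p x y =
     (case (x, y) of
        (Inr a, Inr b) \<Rightarrow> None
      | (Inr a, Inl f) \<Rightarrow>
          (if \<forall>i\<in>I. pleq E p (f (inv_into I rho i)) (a i)
           then Some (Inr (\<lambda>i\<in>I. minus_r E p (f (inv_into I rho i)) (a i))) else None)
      | (Inl f, Inr a) \<Rightarrow>
          (if \<forall>i\<in>I. pleq E p (f (inv_into I lam i)) (a i)
           then Some (Inr (\<lambda>i\<in>I. minus_l E p (a i) (f (inv_into I lam i)))) else None)
      | (Inl f, Inl g) \<Rightarrow>
          (if \<forall>i\<in>I. p (f i) (g i) \<noteq> None
           then Some (Inl (\<lambda>i\<in>I. the (p (f i) (g i)))) else None))"

definition RDP1 :: "'b set \<Rightarrow> ('b \<Rightarrow> 'b \<Rightarrow> 'b option) \<Rightarrow> 'b \<Rightarrow> bool" where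
  "RDP1 S p z \<longleftrightarrow>
     (\<forall>a1\<in>S. \<forall>a2\<in>S. \<forall>b1\<in>S. \<forall>b2\<in>S. p a1 a2 \<noteq> None \<and> p a1 a2 = p b1 b2 \<longrightarrow>
        (\<exists>c11\<in>S. \<exists>c12\<in>S. \<exists>c21\<in>S. \<exists>c22\<in>S.
            p c11 c12 = Some a1 \<and> p c21 c22 = Some a2 \<and>
            p c11 c21 = Some b1 \<and> p c12 c22 = Some b2 \<and>
            (\<forall>x\<in>S. \<forall>y\<in>S. pleq S p z x \<and> pleq S p x c12 \<and> pleq S p z y \<and> pleq S p y c21
                \<longrightarrow> p x y = p y x)))"

definition is_ideal :: "'b set \<Rightarrow> ('b \<Rightarrow> 'b \<Rightarrow> 'b option) \<Rightarrow> 'b set \<Rightarrow> bool" where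
  "is_ideal S p N \<longleftrightarrow>
     N \<noteq> {} \<and> N \<subseteq> S \<and>
     (\<forall>x\<in>N. \<forall>y\<in>N. \<forall>s. p x y = Some s \<longrightarrow> s \<in> N) \<and>
     (\<forall>x\<in>N. \<forall>y\<in>S. pleq S p y x \<longrightarrow> y \<in> N)"

definition is_normal_ideal :: "'b set \<Rightarrow> ('b \<Rightarrow> 'b \<Rightarrow> 'b option) \<Rightarrow> 'b set \<Rightarrow> bool" where
  "is_normal_ideal S p N \<longleftrightarrow> is_ideal S p N \<and>
     (\<forall>x\<in>S. {s. \<exists>y\<in>N. p x y = Some s} = {s. \<exists>y\<in>N. p y x = Some s})"

definition has_least_nontrivial_normal_ideal :: "'b set \<Rightarrow> ('b \<Rightarrow> 'b \<Rightarrow> 'b option) \<Rightarrow> 'b \<Rightarrow> bool" where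
  "has_least_nontrivial_normal_ideal S p z \<longleftrightarrow>
     (\<exists>N. is_normal_ideal S p N \<and> N \<noteq> {z} \<and>
        (\<forall>M. is_normal_ideal S p M \<and> M \<noteq> {z} \<longrightarrow> N \<subseteq> M))"

end

theory Submission
  imports Defs
begin

context
  fixes E :: "'a set" and p :: "'a \<Rightarrow> 'a \<Rightarrow> 'a option" and z :: 'a
  assumes G: "gpea E p z"
begin

lemma gz: "z \<in> E" using G unfolding gpea_def by blast
lemma gcl: "a \<in> E \<Longrightarrow> b \<in> E \<Longrightarrow> p a b = Some c \<Longrightarrow> c \<in> E"
  using G unfolding gpea_def by blast
lemma g2: "a \<in> E \<Longrightarrow> b \<in> E \<Longrightarrow> p a b = Some s \<Longrightarrow> (\<exists>d\<in>E. \<exists>e\<in>E. p d a = Some s \<and> p b e = Some s)"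
  using G unfolding gpea_def by blast
lemma glc: "a \<in> E \<Longrightarrow> b \<in> E \<Longrightarrow> c \<in> E \<Longrightarrow> p a b = Some s \<Longrightarrow> p a c = Some s \<Longrightarrow> b = c"
  using G unfolding gpea_def by (metis option.distinct(1))
lemma grc: "a \<in> E \<Longrightarrow> b \<in> E \<Longrightarrow> c \<in> E \<Longrightarrow> p b a = Some s \<Longrightarrow> p c a = Some s \<Longrightarrow> b = c"
  using G unfolding gpea_def by (metis option.distinct(1))
lemma g4: "a \<in> E \<Longrightarrow> b \<in> E \<Longrightarrow> p a b = Some z \<Longrightarrow> a = z"
  using G unfolding gpea_def by blast
lemma g5: "a \<in> E \<Longrightarrow> p a z = Some a" "a \<in> E \<Longrightarrow> p z a = Some a"
  using G unfolding gpea_def by blast+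

lemma mr_eq: "a \<in> E \<Longrightarrow> c \<in> E \<Longrightarrow> p a c = Some b \<Longrightarrow> minus_r E p a b = c"
  unfolding minus_r_def by (rule the_equality) (auto intro: glc)
lemma ml_eq: "a \<in> E \<Longrightarrow> d \<in> E \<Longrightarrow> p d a = Some b \<Longrightarrow> minus_l E p b a = d"
  unfolding minus_l_def by (rule the_equality) (auto intro: grc)

end

lemma bijf:
  assumes "bij_betw l I I" "i \<in> I"
  shows "inv_into I l i \<in> I" "l (inv_into I l i) = i" "l i \<in> I" "inv_into I l (l i) = i"
  using assms
  by (auto simp: bij_betw_def intro: inv_into_into f_inv_into_f inv_into_f_f)

definition MJ :: "'i set \<Rightarrow> 'a set \<Rightarrow> 'a \<Rightarrow> 'i set \<Rightarrow> (('i \<Rightarrow> 'a) + ('i \<Rightarrow> 'a)) set" where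
  "MJ I E z J = Inl ` {f \<in> I \<rightarrow>\<^sub>E E. \<forall>i\<in>I - J. f i = z}"

context
  fixes I :: "'i set" and lam rho :: "'i \<Rightarrow> 'i"
    and E :: "'a set" and p :: "'a \<Rightarrow> 'a \<Rightarrow> 'a option" and z :: 'a and J :: "'i set"
  assumes bl: "bij_betw lam I I" and br: "bij_betw rho I I" and G: "gpea E p z"
    and cl: "\<forall>j\<in>I. (lam j \<in> J \<longleftrightarrow> j \<in> J) \<and> (rho j \<in> J \<longleftrightarrow> j \<in> J)"
begin

lemma invl_out: "i \<in> I \<Longrightarrow> i \<notin> J \<Longrightarrow> inv_into I lam i \<notin> J"
  using cl bijf[OF bl] by metis
lemma invr_out: "i \<in> I \<Longrightarrow> i \<notin> J \<Longrightarrow> inv_into I rho i \<notin> J"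
  using cl bijf[OF br] by metis

lemma MJ_ideal: "is_ideal (kite_carrier I E) (kite_plus I lam rho E p) (MJ I E z J)"
  unfolding is_ideal_def
proof (intro conjI ballI allI impI)
  show "MJ I E z J \<noteq> {}" proof -
    have "(\<lambda>i\<in>I. z) \<in> I \<rightarrow>\<^sub>E E" using gz[OF G] by auto
    then have "Inl (\<lambda>i\<in>I. z) \<in> MJ I E z J" unfolding MJ_def by auto
    then show ?thesis by auto
  qed
  show "MJ I E z J \<subseteq> kite_carrier I E" unfolding MJ_def kite_carrier_def by auto
next
  fix x y s assume x: "x \<in> MJ I E z J" and y: "y \<in> MJ I E z J" and s: "kite_plus I lam rho E p x y = Some s"
  from x obtain f where f: "f \<in> I \<rightarrow>\<^sub>E E" "\<forall>i\<in>I - J. f i = z" "x = Inl f" unfolding MJ_def by auto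
  from y obtain g where g: "g \<in> I \<rightarrow>\<^sub>E E" "\<forall>i\<in>I - J. g i = z" "y = Inl g" unfolding MJ_def by auto
  from s f g have d: "\<forall>i\<in>I. p (f i) (g i) \<noteq> None" and sv: "s = Inl (\<lambda>i\<in>I. the (p (f i) (g i)))"
    unfolding kite_plus_def by (auto split: if_splits)
  have "(\<lambda>i\<in>I. the (p (f i) (g i))) \<in> I \<rightarrow>\<^sub>E E"
    using d f g gcl[OF G] by fastforce
  moreover have "\<forall>i\<in>I - J. (\<lambda>i\<in>I. the (p (f i) (g i))) i = z"
    using f g g5[OF G] gz[OF G] by auto
  ultimately show "s \<in> MJ I E z J" unfolding MJ_def sv by auto
next
  fix x y assume x: "x \<in> MJ I E z J" and y: "y \<in> kite_carrier I E"
    and le: "pleq (kite_carrier I E) (kite_plus I lam rho E p) y x"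
  from x obtain f where f: "f \<in> I \<rightarrow>\<^sub>E E" "\<forall>i\<in>I - J. f i = z" "x = Inl f" unfolding MJ_def by auto
  from le obtain c where c: "c \<in> kite_carrier I E" "kite_plus I lam rho E p y c = Some x"
    unfolding pleq_def by auto
  obtain g h where gh: "y = Inl g" "c = Inl h"
    using c(2) f(3) unfolding kite_plus_def
    by (cases y; cases c) (auto split: if_splits)
  have g: "g \<in> I \<rightarrow>\<^sub>E E" and h: "h \<in> I \<rightarrow>\<^sub>E E" using y c(1) gh unfolding kite_carrier_def by auto
  from c(2) gh f have d: "\<forall>i\<in>I. p (g i) (h i) \<noteq> None" and fv: "f = (\<lambda>i\<in>I. the (p (g i) (h i)))"
    unfolding kite_plus_def by (auto split: if_splits)
  have "\<forall>i\<in>I - J. g i = z"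
  proof
    fix i assume i: "i \<in> I - J"
    then have "p (g i) (h i) = Some z" using d fv f(2) by force
    then show "g i = z" using g4[OF G] g h i by auto
  qed
  then show "y \<in> MJ I E z J" using g gh unfolding MJ_def by auto
qed


lemma norm_Inl:
  assumes g: "g \<in> I \<rightarrow>\<^sub>E E"
  shows "{s. \<exists>y\<in>MJ I E z J. kite_plus I lam rho E p (Inl g) y = Some s}
       = {s. \<exists>y\<in>MJ I E z J. kite_plus I lam rho E p y (Inl g) = Some s}"
proof (intro equalityI subsetI; simp only: mem_Collect_eq)
  fix s assume "\<exists>y\<in>MJ I E z J. kite_plus I lam rho E p (Inl g) y = Some s"
  then obtain f where f: "f \<in> I \<rightarrow>\<^sub>E E" "\<forall>i\<in>I - J. f i = z"
    and s: "kite_plus I lam rho E p (Inl g) (Inl f) = Some s" unfolding MJ_def by auto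
  from s have d: "\<forall>i\<in>I. p (g i) (f i) \<noteq> None" and sv: "s = Inl (\<lambda>i\<in>I. the (p (g i) (f i)))"
    unfolding kite_plus_def by (auto split: if_splits)
  define f' where "f' = (\<lambda>i\<in>I. if i \<in> J then (SOME d. d \<in> E \<and> p d (g i) = p (g i) (f i)) else z)"
  have key: "f' i \<in> E \<and> p (f' i) (g i) = p (g i) (f i)" if i: "i \<in> I" for i
  proof (cases "i \<in> J")
    case True
    obtain t where t: "p (g i) (f i) = Some t" using d i by auto
    have "\<exists>d. d \<in> E \<and> p d (g i) = p (g i) (f i)" using g2[OF G, of "g i" "f i" t] g f i t by auto
    then have X: "(SOME d. d \<in> E \<and> p d (g i) = p (g i) (f i)) \<in> E \<and> p (SOME d. d \<in> E \<and> p d (g i) = p (g i) (f i)) (g i) = p (g i) (f i)" by (rule someI_ex)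
    then show ?thesis unfolding f'_def using i True by simp
  next
    case False
    have gi: "g i \<in> E" using g i by auto
    then show ?thesis unfolding f'_def using i False f g5[OF G, OF gi] gz[OF G] by auto
  qed
  have f'M: "Inl f' \<in> MJ I E z J" unfolding MJ_def using key by (auto simp: f'_def)
  have "kite_plus I lam rho E p (Inl f') (Inl g) = Some s"
    unfolding kite_plus_def sv using key d by (auto intro!: restrict_ext)
  then show "\<exists>y\<in>MJ I E z J. kite_plus I lam rho E p y (Inl g) = Some s" using f'M by blast
next
  fix s assume "\<exists>y\<in>MJ I E z J. kite_plus I lam rho E p y (Inl g) = Some s"
  then obtain f where f: "f \<in> I \<rightarrow>\<^sub>E E" "\<forall>i\<in>I - J. f i = z"
    and s: "kite_plus I lam rho E p (Inl f) (Inl g) = Some s" unfolding MJ_def by auto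
  from s have d: "\<forall>i\<in>I. p (f i) (g i) \<noteq> None" and sv: "s = Inl (\<lambda>i\<in>I. the (p (f i) (g i)))"
    unfolding kite_plus_def by (auto split: if_splits)
  define f' where "f' = (\<lambda>i\<in>I. if i \<in> J then (SOME e. e \<in> E \<and> p (g i) e = p (f i) (g i)) else z)"
  have key: "f' i \<in> E \<and> p (g i) (f' i) = p (f i) (g i)" if i: "i \<in> I" for i
  proof (cases "i \<in> J")
    case True
    obtain t where t: "p (f i) (g i) = Some t" using d i by auto
    have "\<exists>e. e \<in> E \<and> p (g i) e = p (f i) (g i)" using g2[OF G, of "f i" "g i" t] g f i t by auto
    then have X: "(SOME e. e \<in> E \<and> p (g i) e = p (f i) (g i)) \<in> E \<and> p (g i) (SOME e. e \<in> E \<and> p (g i) e = p (f i) (g i)) = p (f i) (g i)" by (rule someI_ex)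
    then show ?thesis unfolding f'_def using i True by simp
  next
    case False
    have gi: "g i \<in> E" using g i by auto
    then show ?thesis unfolding f'_def using i False f g5[OF G, OF gi] gz[OF G] by auto
  qed
  have f'M: "Inl f' \<in> MJ I E z J" unfolding MJ_def using key by (auto simp: f'_def)
  have "kite_plus I lam rho E p (Inl g) (Inl f') = Some s"
    unfolding kite_plus_def sv using key d by (auto intro!: restrict_ext)
  then show "\<exists>y\<in>MJ I E z J. kite_plus I lam rho E p (Inl g) y = Some s" using f'M by blast
qed


lemma norm_Inr:
  assumes a: "a \<in> I \<rightarrow>\<^sub>E E"
  shows "{s. \<exists>y\<in>MJ I E z J. kite_plus I lam rho E p (Inr a) y = Some s}
       = {s. \<exists>y\<in>MJ I E z J. kite_plus I lam rho E p y (Inr a) = Some s}"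
proof (intro equalityI subsetI; simp only: mem_Collect_eq)
  fix s assume "\<exists>y\<in>MJ I E z J. kite_plus I lam rho E p (Inr a) y = Some s"
  then obtain f where f: "f \<in> I \<rightarrow>\<^sub>E E" "\<forall>i\<in>I - J. f i = z"
    and s: "kite_plus I lam rho E p (Inr a) (Inl f) = Some s" unfolding MJ_def by auto
  from s have d: "\<forall>i\<in>I. pleq E p (f (inv_into I rho i)) (a i)"
    and sv: "s = Inr (\<lambda>i\<in>I. minus_r E p (f (inv_into I rho i)) (a i))"
    unfolding kite_plus_def by (auto split: if_splits)
  define c where "c i = minus_r E p (f (inv_into I rho i)) (a i)" for i
  have hc: "c i \<in> E \<and> p (f (inv_into I rho i)) (c i) = Some (a i)" if i: "i \<in> I" for i
  proof -
    obtain c0 where c0: "c0 \<in> E" "p (f (inv_into I rho i)) c0 = Some (a i)" using d i unfolding pleq_def by auto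
    have "f (inv_into I rho i) \<in> E" using f bijf[OF br i] by auto
    then have "c i = c0" unfolding c_def using mr_eq[OF G] c0 by blast
    then show ?thesis using c0 by simp
  qed
  define e where "e i = (if i \<in> J then (SOME e. e \<in> E \<and> p (c i) e = Some (a i)) else z)" for i
  have ke: "e i \<in> E \<and> p (c i) (e i) = Some (a i)" if i: "i \<in> I" for i
  proof (cases "i \<in> J")
    case True
    have fr: "f (inv_into I rho i) \<in> E" using f bijf[OF br i] by auto
    have "\<exists>e. e \<in> E \<and> p (c i) e = Some (a i)" using g2[OF G, OF fr, of "c i" "a i"] hc[OF i] by auto
    then have X: "(SOME e. e \<in> E \<and> p (c i) e = Some (a i)) \<in> E \<and> p (c i) (SOME e. e \<in> E \<and> p (c i) e = Some (a i)) = Some (a i)" by (rule someI_ex)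
    then show ?thesis unfolding e_def using True by simp
  next
    case False
    then have "f (inv_into I rho i) = z" using f invr_out i bijf[OF br i] by auto
    then have "p z (c i) = Some (a i)" using hc[OF i] by simp
    moreover have "p z (c i) = Some (c i)" using g5[OF G] hc[OF i] by blast
    ultimately have "c i = a i" by simp
    moreover have "a i \<in> E" using a i by auto
    ultimately show ?thesis unfolding e_def using False g5[OF G] gz[OF G] by auto
  qed
  define f' where "f' = (\<lambda>j\<in>I. e (lam j))"
  have f'M: "Inl f' \<in> MJ I E z J" unfolding MJ_def f'_def
  proof (intro imageI CollectI conjI ballI)
    show "(\<lambda>j\<in>I. e (lam j)) \<in> I \<rightarrow>\<^sub>E E" using ke bijf[OF bl] by auto
    fix j assume "j \<in> I - J"
    then show "(\<lambda>j\<in>I. e (lam j)) j = z" using cl unfolding e_def by auto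
  qed
  have f'L: "f' (inv_into I lam i) = e i" if "i \<in> I" for i
    unfolding f'_def using bijf[OF bl that] by simp
  have le: "pleq E p (f' (inv_into I lam i)) (a i)" if i: "i \<in> I" for i
  proof -
    have "c i \<in> E" "e i \<in> E" "p (c i) (e i) = Some (a i)" using hc[OF i] ke[OF i] by auto
    then show ?thesis using g2[OF G] f'L[OF i] unfolding pleq_def by metis
  qed
  have vv: "minus_l E p (a i) (f' (inv_into I lam i)) = c i" if i: "i \<in> I" for i
    using ml_eq[OF G] hc[OF i] ke[OF i] f'L[OF i] by metis
  have "kite_plus I lam rho E p (Inl f') (Inr a) = Some s"
    unfolding kite_plus_def sv using le vv by (auto intro!: restrict_ext simp: c_def)
  then show "\<exists>y\<in>MJ I E z J. kite_plus I lam rho E p y (Inr a) = Some s" using f'M by blast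
next
  fix s assume "\<exists>y\<in>MJ I E z J. kite_plus I lam rho E p y (Inr a) = Some s"
  then obtain f where f: "f \<in> I \<rightarrow>\<^sub>E E" "\<forall>i\<in>I - J. f i = z"
    and s: "kite_plus I lam rho E p (Inl f) (Inr a) = Some s" unfolding MJ_def by auto
  from s have d: "\<forall>i\<in>I. pleq E p (f (inv_into I lam i)) (a i)"
    and sv: "s = Inr (\<lambda>i\<in>I. minus_l E p (a i) (f (inv_into I lam i)))"
    unfolding kite_plus_def by (auto split: if_splits)
  define c where "c i = minus_l E p (a i) (f (inv_into I lam i))" for i
  have hc: "c i \<in> E \<and> p (c i) (f (inv_into I lam i)) = Some (a i)" if i: "i \<in> I" for i
  proof -
    obtain c1 where c1: "c1 \<in> E" "p (f (inv_into I lam i)) c1 = Some (a i)" using d i unfolding pleq_def by auto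
    have fl: "f (inv_into I lam i) \<in> E" using f bijf[OF bl i] by auto
    obtain c0 where c0: "c0 \<in> E" "p c0 (f (inv_into I lam i)) = Some (a i)"
      using g2[OF G, OF fl c1(1) c1(2)] by auto
    then have "c i = c0" unfolding c_def using ml_eq[OF G] fl by blast
    then show ?thesis using c0 by simp
  qed
  define e where "e i = (if i \<in> J then (SOME e. e \<in> E \<and> p e (c i) = Some (a i)) else z)" for i
  have ke: "e i \<in> E \<and> p (e i) (c i) = Some (a i)" if i: "i \<in> I" for i
  proof (cases "i \<in> J")
    case True
    have fl: "f (inv_into I lam i) \<in> E" using f bijf[OF bl i] by auto
    have "\<exists>e. e \<in> E \<and> p e (c i) = Some (a i)" using g2[OF G, of "c i" _ "a i"] fl hc[OF i] by blast
    then have X: "(SOME e. e \<in> E \<and> p e (c i) = Some (a i)) \<in> E \<and> p (SOME e. e \<in> E \<and> p e (c i) = Some (a i)) (c i) = Some (a i)" by (rule someI_ex)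
    then show ?thesis unfolding e_def using True by simp
  next
    case False
    then have "f (inv_into I lam i) = z" using f invl_out i bijf[OF bl i] by auto
    then have "p (c i) z = Some (a i)" using hc[OF i] by simp
    moreover have "p (c i) z = Some (c i)" using g5[OF G] hc[OF i] by blast
    ultimately have "c i = a i" by simp
    moreover have "a i \<in> E" using a i by auto
    ultimately show ?thesis unfolding e_def using False g5[OF G] gz[OF G] by auto
  qed
  define f' where "f' = (\<lambda>j\<in>I. e (rho j))"
  have f'M: "Inl f' \<in> MJ I E z J" unfolding MJ_def f'_def
  proof (intro imageI CollectI conjI ballI)
    show "(\<lambda>j\<in>I. e (rho j)) \<in> I \<rightarrow>\<^sub>E E" using ke bijf[OF br] by auto
    fix j assume "j \<in> I - J"
    then show "(\<lambda>j\<in>I. e (rho j)) j = z" using cl unfolding e_def by auto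
  qed
  have f'R: "f' (inv_into I rho i) = e i" if "i \<in> I" for i
    unfolding f'_def using bijf[OF br that] by simp
  have le: "pleq E p (f' (inv_into I rho i)) (a i)" if i: "i \<in> I" for i
    using hc[OF i] ke[OF i] f'R[OF i] unfolding pleq_def by metis
  have vv: "minus_r E p (f' (inv_into I rho i)) (a i) = c i" if i: "i \<in> I" for i
    using mr_eq[OF G] hc[OF i] ke[OF i] f'R[OF i] by metis
  have "kite_plus I lam rho E p (Inr a) (Inl f') = Some s"
    unfolding kite_plus_def sv using le vv by (auto intro!: restrict_ext simp: c_def)
  then show "\<exists>y\<in>MJ I E z J. kite_plus I lam rho E p (Inr a) y = Some s" using f'M by blast
qed

lemma MJ_normal: "is_normal_ideal (kite_carrier I E) (kite_plus I lam rho E p) (MJ I E z J)"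
  unfolding is_normal_ideal_def
proof (intro conjI ballI MJ_ideal)
  fix x assume "x \<in> kite_carrier I E"
  then show "{s. \<exists>y\<in>MJ I E z J. kite_plus I lam rho E p x y = Some s} =
         {s. \<exists>y\<in>MJ I E z J. kite_plus I lam rho E p y x = Some s}"
    unfolding kite_carrier_def using norm_Inl norm_Inr by blast
qed

end


lemma MJ_nontriv:
  assumes "k \<in> I" "k \<in> K" "e \<in> E" "e \<noteq> z" "z \<in> E"
  shows "MJ I E z K \<noteq> {kite_zero I z}"
proof
  assume h: "MJ I E z K = {kite_zero I z}"
  have "Inl (\<lambda>i\<in>I. if i = k then e else z) \<in> MJ I E z K"
    unfolding MJ_def using assms by auto
  then have "(\<lambda>i\<in>I. if i = k then e else z) = (\<lambda>i\<in>I. z)" using h unfolding kite_zero_def by auto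
  then have "(\<lambda>i\<in>I. if i = k then e else z) k = (\<lambda>i\<in>I. z) k" by simp
  then show False using assms by simp
qed

lemma MJ_inter:
  assumes "x \<in> MJ I E z K" "x \<in> MJ I E z (I - K)"
  shows "x = kite_zero I z"
proof -
  obtain f where f: "f \<in> I \<rightarrow>\<^sub>E E" "\<forall>i\<in>I - K. f i = z" "x = Inl f" using assms(1) unfolding MJ_def by auto
  have f2: "\<forall>i\<in>I - (I - K). f i = z" using assms(2) f(3) unfolding MJ_def by auto
  have "f = (\<lambda>i\<in>I. z)"
  proof
    fix i show "f i = (\<lambda>i\<in>I. z) i" using f f2 by (cases "i \<in> I") (auto simp: PiE_def extensional_def)
  qed
  then show ?thesis using f unfolding kite_zero_def by simp
qed

fun stp :: "'i set \<Rightarrow> ('i \<Rightarrow> 'i) \<Rightarrow> ('i \<Rightarrow> 'i) \<Rightarrow> nat \<Rightarrow> 'i \<Rightarrow> 'i" where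
  "stp I l r n = (if n = 0 then l else if n = 1 then r else if n = 2 then inv_into I l else inv_into I r)"

lemma orbit_in:
  assumes "bij_betw l I I" "bij_betw r I I" "i0 \<in> I"
  shows "foldr (stp I l r) xs i0 \<in> I"
  by (induction xs) (auto simp: assms bijf[OF assms(1)] bijf[OF assms(2)])

theorem lemma4p8:
  fixes I :: "'i set" and lam rho :: "'i \<Rightarrow> 'i"
    and E :: "'a set" and p :: "'a \<Rightarrow> 'a \<Rightarrow> 'a option" and z :: 'a
  assumes "bij_betw lam I I" and "bij_betw rho I I"
    and "gpea E p z" and "E \<noteq> {z}" and "directed E p"
    and "weakly_comm I lam rho E p"
    and "RDP1 (kite_carrier I E) (kite_plus I lam rho E p) (kite_zero I z)"
    and "has_least_nontrivial_normal_ideal (kite_carrier I E) (kite_plus I lam rho E p) (kite_zero I z)"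
  shows "countable I"
proof (rule ccontr)
  assume nc: "\<not> countable I"
  then obtain i0 where i0: "i0 \<in> I" by (metis countable_empty equals0I)
  define J where "J = (\<lambda>xs. foldr (stp I lam rho) xs i0) ` UNIV"
  have cJ: "countable J" unfolding J_def by simp
  have JI: "J \<subseteq> I" unfolding J_def using orbit_in[OF assms(1,2) i0] by auto
  have i0J: "i0 \<in> J" unfolding J_def by (auto intro!: image_eqI[of _ _ "[]"])
  have cl: "\<forall>j\<in>I. (lam j \<in> J \<longleftrightarrow> j \<in> J) \<and> (rho j \<in> J \<longleftrightarrow> j \<in> J)"
  proof (intro ballI conjI iffI)
    fix j assume j: "j \<in> I"
    { assume "j \<in> J" then obtain xs where xs: "j = foldr (stp I lam rho) xs i0" unfolding J_def by auto
      have "lam j = foldr (stp I lam rho) (0 # xs) i0" using xs by simp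
      then show "lam j \<in> J" unfolding J_def by blast }
    { assume "j \<in> J" then obtain xs where xs: "j = foldr (stp I lam rho) xs i0" unfolding J_def by auto
      have "rho j = foldr (stp I lam rho) (1 # xs) i0" using xs by simp
      then show "rho j \<in> J" unfolding J_def by blast }
    { assume "lam j \<in> J" then obtain xs where xs: "lam j = foldr (stp I lam rho) xs i0" unfolding J_def by auto
      have "j = foldr (stp I lam rho) (2 # xs) i0" using xs bijf[OF assms(1) j] by simp
      then show "j \<in> J" unfolding J_def by blast }
    { assume "rho j \<in> J" then obtain xs where xs: "rho j = foldr (stp I lam rho) xs i0" unfolding J_def by auto
      have "j = foldr (stp I lam rho) (3 # xs) i0" using xs bijf[OF assms(2) j] by simp
      then show "j \<in> J" unfolding J_def by blast }
  qed
  have cl2: "\<forall>j\<in>I. (lam j \<in> I - J \<longleftrightarrow> j \<in> I - J) \<and> (rho j \<in> I - J \<longleftrightarrow> j \<in> I - J)"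
    using cl bijf(3)[OF assms(1)] bijf(3)[OF assms(2)] by blast
  have "\<not> I \<subseteq> J" using nc cJ countable_subset by metis
  then obtain i1 where i1: "i1 \<in> I" "i1 \<notin> J" by blast
  obtain e where e: "e \<in> E" "e \<noteq> z" using assms(4) gz[OF assms(3)] by blast
  have N1: "is_normal_ideal (kite_carrier I E) (kite_plus I lam rho E p) (MJ I E z J)"
    by (rule MJ_normal[OF assms(1,2,3) cl])
  have N2: "is_normal_ideal (kite_carrier I E) (kite_plus I lam rho E p) (MJ I E z (I - J))"
    by (rule MJ_normal[OF assms(1,2,3) cl2])
  have T1: "MJ I E z J \<noteq> {kite_zero I z}" using MJ_nontriv[OF i0 i0J e gz[OF assms(3)]] .
  have T2: "MJ I E z (I - J) \<noteq> {kite_zero I z}" using MJ_nontriv[OF i1(1) _ e gz[OF assms(3)]] i1 by auto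
  obtain N where N0: "is_normal_ideal (kite_carrier I E) (kite_plus I lam rho E p) N \<and> N \<noteq> {kite_zero I z} \<and>
    (\<forall>M. is_normal_ideal (kite_carrier I E) (kite_plus I lam rho E p) M \<and> M \<noteq> {kite_zero I z} \<longrightarrow> N \<subseteq> M)"
    using assms(8) unfolding has_least_nontrivial_normal_ideal_def by (elim exE)
  note N = conjunct1[OF N0] conjunct1[OF conjunct2[OF N0]] conjunct2[OF conjunct2[OF N0]]
  have "N \<subseteq> MJ I E z J" "N \<subseteq> MJ I E z (I - J)" using N(3) N1 N2 T1 T2 by blast+
  then have "N \<subseteq> {kite_zero I z}"
  proof (intro subsetI)
    fix x assume "N \<subseteq> MJ I E z J" "N \<subseteq> MJ I E z (I - J)" "x \<in> N"
    then have "x = kite_zero I z" using MJ_inter[of x I E z J] by (simp add: subset_iff)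
    then show "x \<in> {kite_zero I z}" by simp
  qed
  moreover have "N \<noteq> {}" using N(1) unfolding is_normal_ideal_def is_ideal_def by blast
  ultimately show False using N(2) by blast
qed

end
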